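(* Let $\mathcal{X}\subseteq\mathbb{R}^d$, $k,T\in\mathbb{N}$, $\beta_{\mathrm{count}},\beta_{\mathrm{sum}}>0$ and fixed initial cluster centers. The weighted DP-Lloyd algorithm (defined below) admits the weighted distinguishability profile $$\epsilon_{\mathrm{Lloyd}}(w,\mathbf{x})=\Big(\frac1{\beta_{\mathrm{count}}}+\frac{\|\mathbf{x}\|_1}{\beta_{\mathrm{sum}}}\Big)Tw.$$
   Context: Weighted DP-Lloyd: input a weighted data set $\mathcal{S}=\{(w_i,\mathbf{x}_i)\}_{i=1}^n$ ($w_i\ge1$, $\mathbf{x}_i\in\mathcal{X}$), initial centers $\mathbf{c}_1,\dots,\mathbf{c}_k$, iterations $T$, noise scales $\beta_{\mathrm{sum}},\beta_{\mathrm{count}}$. For $t=1,\dots,T$: compute clusters $\mathcal{C}_j=\{(w_i,\mathbf{x}_i)\mid j=\arg\min_{j'}\|\mathbf{x}_i-\mathbf{c}_{j'}\|_2^2\}$; for each $j$ sample $\xi_j\sim\mathrm{Lap}(0,\beta_{\mathrm{count}})$ and $\zeta_j\in\mathbb{R}^d$ with iid $\mathrm{Lap}(0,\beta_{\mathrm{sum}})$ entries, all independent, and update $\mathbf{c}_j=\big(\xi_j+\sum_{(w,\mathbf{x})\in\mathcal{C}_j}w\big)^{-1}\big(\zeta_j+\sum_{(w,\mathbf{x})\in\mathcal{C}_j}w\mathbf{x}\big)$. Output the final centers. Distributions $P,Q$ are $\epsilon$-indistinguishable if $P(Y)\le e^\epsilon Q(Y)$ and $Q(Y)\le e^\epsilon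 P(Y)$ for all measurable $Y$. A function $\epsilon\colon[1,\infty)\times\mathcal{X}\to\mathbb{R}_{\ge0}$ is a weighted distinguishability profile of a mechanism $\mathcal{M}$ if for every weighted data set $\mathcal{S}$ and every $(w',\mathbf{x}')$, $\mathcal{M}(\mathcal{S})$ and $\mathcal{M}(\mathcal{S}\cup\{(w',\mathbf{x}')\})$ are $\epsilon(w',\mathbf{x}')$-indistinguishable. *)

theory Defs
  imports "HOL-Probability.Probability"
begin

text \<open>Weighted data sets are finite multisets of pairs (weight, point) with points in real^'d.
Cluster centers are functions nat => real^'d, of which the indices 0..<k are relevant.\<close>

type_synonym 'd wdata = "(real \<times> (real^'d)) multiset"

definition l1norm :: "real^'d \<Rightarrow> real" where
  "l1norm x = (\<Sum>i\<in>UNIV. \<bar>x $ i\<bar>)"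

definition lap_pdf :: "real \<Rightarrow> real \<Rightarrow> real" where
  "lap_pdf b t = exp (- \<bar>t\<bar> / b) / (2 * b)"

definition lap :: "real \<Rightarrow> real measure" where
  "lap b = density lborel (\<lambda>t. ennreal (lap_pdf b t))"

definition lap_vec :: "real \<Rightarrow> (real^'d) measure" where
  "lap_vec b = distr (PiM UNIV (\<lambda>_::'d. lap b)) borel (\<lambda>f. \<chi> i. f i)"

definition iter_noise :: "nat \<Rightarrow> real \<Rightarrow> real \<Rightarrow> (nat \<Rightarrow> real \<times> (real^'d)) measure" where
  "iter_noise k b_count b_sum = PiM {..<k} (\<lambda>_. lap b_count \<Otimes>\<^sub>M lap_vec b_sum)"

definition assign :: "nat \<Rightarrow> (nat \<Rightarrow> real^'d) \<Rightarrow> real^'d \<Rightarrow> nat" where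
  "assign k c x = (LEAST j. j < k \<and> (\<forall>j'<k. (norm (x - c j))\<^sup>2 \<le> (norm (x - c j'))\<^sup>2))"

definition cluster_weight :: "nat \<Rightarrow> 'd wdata \<Rightarrow> (nat \<Rightarrow> real^'d) \<Rightarrow> nat \<Rightarrow> real" where
  "cluster_weight k S c j = sum_mset (image_mset (\<lambda>(w, x). if assign k c x = j then w else 0) S)"

definition cluster_sum :: "nat \<Rightarrow> 'd wdata \<Rightarrow> (nat \<Rightarrow> real^'d) \<Rightarrow> nat \<Rightarrow> real^'d" where
  "cluster_sum k S c j = sum_mset (image_mset (\<lambda>(w, x). if assign k c x = j then w *\<^sub>R x else 0) S)"

definition lloyd_step :: "nat \<Rightarrow> 'd wdata \<Rightarrow> (nat \<Rightarrow> real^'d) \<Rightarrow> (nat \<Rightarrow> real \<times> (real^'d))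
    \<Rightarrow> (nat \<Rightarrow> real^'d)" where
  "lloyd_step k S c nz = (\<lambda>j. if j < k then
       inverse (fst (nz j) + cluster_weight k S c j) *\<^sub>R (snd (nz j) + cluster_sum k S c j)
     else undefined)"

fun lloyd_run :: "nat \<Rightarrow> 'd wdata \<Rightarrow> (nat \<Rightarrow> real^'d) \<Rightarrow> nat
    \<Rightarrow> (nat \<Rightarrow> nat \<Rightarrow> real \<times> (real^'d)) \<Rightarrow> (nat \<Rightarrow> real^'d)" where
  "lloyd_run k S c0 0 ns = c0"
| "lloyd_run k S c0 (Suc t) ns = lloyd_step k S (lloyd_run k S c0 t ns) (ns t)"

definition dp_lloyd :: "nat \<Rightarrow> nat \<Rightarrow> real \<Rightarrow> real \<Rightarrow> (nat \<Rightarrow> real^'d) \<Rightarrow> 'd wdata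
    \<Rightarrow> (nat \<Rightarrow> real^'d) measure" where
  "dp_lloyd k T b_count b_sum c0 S =
     distr (PiM {..<T} (\<lambda>_. iter_noise k b_count b_sum)) (PiM {..<k} (\<lambda>_. borel))
       (\<lambda>ns. restrict (lloyd_run k S c0 T ns) {..<k})"

definition indist :: "real \<Rightarrow> 'a measure \<Rightarrow> 'a measure \<Rightarrow> bool" where
  "indist eps P Q \<longleftrightarrow>
     (\<forall>Y \<in> sets P. measure P Y \<le> exp eps * measure Q Y \<and> measure Q Y \<le> exp eps * measure P Y)"

definition weighted_profile ::
    "(real^'d) set \<Rightarrow> (real \<Rightarrow> real^'d \<Rightarrow> real) \<Rightarrow> ('d wdata \<Rightarrow> 'b measure) \<Rightarrow> bool" where
  "weighted_profile X eps M \<longleftrightarrow>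
     (\<forall>w x. w \<ge> 1 \<longrightarrow> x \<in> X \<longrightarrow> eps w x \<ge> 0) \<and>
     (\<forall>S. (\<forall>p \<in># S. fst p \<ge> 1 \<and> snd p \<in> X) \<longrightarrow>
        (\<forall>w' x'. w' \<ge> 1 \<longrightarrow> x' \<in> X \<longrightarrow>
           indist (eps w' x') (M S) (M (add_mset (w', x') S))))"

end

theory Submission
  imports Defs
begin
definition shiftbd :: "'a measure \<Rightarrow> ('a \<Rightarrow> 'a) \<Rightarrow> ennreal \<Rightarrow> bool" where
  "shiftbd M g c \<longleftrightarrow> g \<in> measurable M M \<and>
     (\<forall>h \<in> borel_measurable M. (\<integral>\<^sup>+x. h (g x) \<partial>M) \<le> c * (\<integral>\<^sup>+x. h x \<partial>M))"

lemma sets_lap[simp, measurable_cong]: "sets (lap b) = sets borel"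
  by (simp add: lap_def)

lemma measurable_lap1[simp]: "measurable (lap b) M = measurable borel M"
  by (rule measurable_cong_sets) (auto simp: lap_def)

lemma measurable_lap2[simp]: "measurable M (lap b) = measurable M borel"
  by (rule measurable_cong_sets) (auto simp: lap_def)

lemma space_lap[simp]: "space (lap b) = UNIV"
  by (simp add: lap_def)

lemma lap_pdf_nonneg: "b > 0 \<Longrightarrow> lap_pdf b t \<ge> 0"
  by (simp add: lap_pdf_def)

lemma lap_pdf_meas[measurable]: "lap_pdf b \<in> borel_measurable borel"
  unfolding lap_pdf_def by measurable

lemma prob_space_lap:
  assumes b: "b > 0" shows "prob_space (lap b)"
proof
  let ?e = "exponential_density (1/b)"
  have ae: "AE t in lborel. ennreal (lap_pdf b t) = ennreal (?e t) / 2 + ennreal (?e (-t)) / 2"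
    using AE_lborel_singleton[of 0]
  proof eventually_elim
    case (elim t)
    show ?case
    proof (cases "t < 0")
      case True
      then show ?thesis using b
        by (simp add: exponential_density_def lap_pdf_def ennreal_divide_numeral divide_ennreal field_simps)
    next
      case False
      then show ?thesis using b elim
        by (simp add: exponential_density_def lap_pdf_def ennreal_divide_numeral divide_ennreal field_simps)
    qed
  qed
  have half: "(1::ennreal)/2 + 1/2 = 1"
  proof -
    have "(1::ennreal)/2 + 1/2 = (1+1)/2" by (simp only: add_divide_distrib_ennreal)
    also have "\<dots> = 1" using divide_ennreal[of 2 2] by simp
    finally show ?thesis .
  qed
  have e1: "(\<integral>\<^sup>+t. ennreal (?e t) \<partial>lborel) = 1"
    using prob_space.emeasure_space_1[OF prob_space_exponential_density[of "1/b"]] b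
    by (simp add: emeasure_density)
  have e2: "(\<integral>\<^sup>+t. ennreal (?e (-t)) \<partial>lborel) = 1"
    using nn_integral_real_affine[of "\<lambda>t. ennreal (?e t)" "-1" 0] e1 by simp
  have "emeasure (lap b) (space (lap b)) = (\<integral>\<^sup>+t. ennreal (lap_pdf b t) \<partial>lborel)"
    by (simp add: lap_def emeasure_density)
  also have "\<dots> = (\<integral>\<^sup>+t. ennreal (?e t) / 2 + ennreal (?e (-t)) / 2 \<partial>lborel)"
    by (rule nn_integral_cong_AE[OF ae])
  also have "\<dots> = (\<integral>\<^sup>+t. ennreal (?e t) / 2 \<partial>lborel) + (\<integral>\<^sup>+t. ennreal (?e (-t)) / 2 \<partial>lborel)"
    by (rule nn_integral_add) auto
  also have "\<dots> = 1"
    using e1 e2 half by (simp add: nn_integral_divide ennreal_divide_numeral)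
  finally show "emeasure (lap b) (space (lap b)) = 1" .
qed

lemma lap_shift:
  assumes b: "b > 0" and h: "h \<in> borel_measurable borel"
  shows "(\<integral>\<^sup>+t. h (t + a) \<partial>lap b) \<le> ennreal (exp (\<bar>a\<bar> / b)) * (\<integral>\<^sup>+t. h t \<partial>lap b)"
proof -
  have "(\<integral>\<^sup>+t. h (t + a) \<partial>lap b) = (\<integral>\<^sup>+t. ennreal (lap_pdf b t) * h (t + a) \<partial>lborel)"
    unfolding lap_def using h by (subst nn_integral_density) auto
  also have "\<dots> = (\<integral>\<^sup>+t. ennreal (lap_pdf b (t - a)) * h t \<partial>lborel)"
    using nn_integral_real_affine[of "\<lambda>t. ennreal (lap_pdf b t) * h (t + a)" 1 "-a"] h by simp
  also have "\<dots> \<le> (\<integral>\<^sup>+t. ennreal (exp (\<bar>a\<bar> / b)) * (ennreal (lap_pdf b t) * h t) \<partial>lborel)"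
  proof (rule nn_integral_mono)
    fix t
    have "-\<bar>t - a\<bar> \<le> \<bar>a\<bar> - \<bar>t\<bar>" by linarith
    hence "exp (- \<bar>t - a\<bar> / b) \<le> exp (\<bar>a\<bar> / b) * exp (- \<bar>t\<bar> / b)"
      using b by (simp add: exp_add[symmetric] divide_simps)
    hence "lap_pdf b (t - a) \<le> exp (\<bar>a\<bar> / b) * lap_pdf b t"
      using b unfolding lap_pdf_def by (simp add: divide_simps)
    hence "ennreal (lap_pdf b (t - a)) \<le> ennreal (exp (\<bar>a\<bar> / b)) * ennreal (lap_pdf b t)"
      by (simp add: ennreal_mult'[symmetric] ennreal_leI)
    then show "ennreal (lap_pdf b (t - a)) * h t \<le> ennreal (exp (\<bar>a\<bar> / b)) * (ennreal (lap_pdf b t) * h t)"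
      by (metis mult.assoc mult_right_mono zero_le)
  qed
  also have "\<dots> = ennreal (exp (\<bar>a\<bar> / b)) * (\<integral>\<^sup>+t. ennreal (lap_pdf b t) * h t \<partial>lborel)"
    using h by (subst nn_integral_cmult) auto
  also have "\<dots> = ennreal (exp (\<bar>a\<bar> / b)) * (\<integral>\<^sup>+t. h t \<partial>lap b)"
    unfolding lap_def using h by (subst nn_integral_density) auto
  finally show ?thesis .
qed

lemma coord_shift:
  fixes M :: "'i \<Rightarrow> 'a measure"
  assumes sf: "\<And>i. sigma_finite_measure (M i)" and fin: "finite I" and j: "j \<in> I"
    and g: "g \<in> measurable (M j) (M j)"
    and bd: "\<And>h. h \<in> borel_measurable (M j) \<Longrightarrow> (\<integral>\<^sup>+y. h (g y) \<partial>M j) \<le> c * (\<integral>\<^sup>+y. h y \<partial>M j)"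
    and hm: "h \<in> borel_measurable (PiM I M)"
  shows "(\<integral>\<^sup>+x. h (x(j := g (x j))) \<partial>PiM I M) \<le> c * (\<integral>\<^sup>+x. h x \<partial>PiM I M)"
proof -
  interpret product_sigma_finite M using sf by (simp add: product_sigma_finite_def)
  define I' where "I' = I - {j}"
  have I: "I = insert j I'" and jI: "j \<notin> I'" and fI: "finite I'" using j fin by (auto simp: I'_def)
  have mm: "(\<lambda>x. x(j := g (x j))) \<in> measurable (PiM I M) (PiM I M)"
    by (rule measurable_fun_upd[where J=I]) (use j g in auto)
  have hm': "(\<lambda>x. h (x(j := g (x j)))) \<in> borel_measurable (PiM (insert j I') M)"
    using measurable_comp[OF mm hm] I by (simp add: comp_def)
  have hmI: "h \<in> borel_measurable (PiM (insert j I') M)" using hm I by simp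
  have inner: "(\<lambda>x. \<integral>\<^sup>+y. h (x(j := y)) \<partial>M j) \<in> borel_measurable (PiM I' M)"
    using hmI by measurable
  have "(\<integral>\<^sup>+x. h (x(j := g (x j))) \<partial>PiM I M)
      = (\<integral>\<^sup>+x. \<integral>\<^sup>+y. h (x(j := g y)) \<partial>M j \<partial>PiM I' M)"
    unfolding I by (subst product_nn_integral_insert[OF fI jI hm']) simp
  also have "\<dots> \<le> (\<integral>\<^sup>+x. c * \<integral>\<^sup>+y. h (x(j := y)) \<partial>M j \<partial>PiM I' M)"
  proof (rule nn_integral_mono)
    fix x assume x: "x \<in> space (PiM I' M)"
    have "(\<lambda>y. h (x(j := y))) \<in> borel_measurable (M j)"
      using measurable_comp[OF measurable_component_update[OF x jI] hmI] by (simp add: comp_def)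
    then show "(\<integral>\<^sup>+y. h (x(j := g y)) \<partial>M j) \<le> c * \<integral>\<^sup>+y. h (x(j := y)) \<partial>M j"
      by (rule bd)
  qed
  also have "\<dots> = c * (\<integral>\<^sup>+x. \<integral>\<^sup>+y. h (x(j := y)) \<partial>M j \<partial>PiM I' M)"
    by (rule nn_integral_cmult[OF inner])
  also have "\<dots> = c * (\<integral>\<^sup>+x. h x \<partial>PiM I M)"
    unfolding I by (subst product_nn_integral_insert[OF fI jI hmI]) simp
  finally show ?thesis .
qed

lemma vec_meas: "(\<lambda>f. \<chi> i. f i) \<in> borel_measurable (PiM UNIV (\<lambda>_::'d::finite. lap b))"
proof -
  have "(\<lambda>f. (\<chi> i. f i) \<bullet> axis j (1::real)) \<in> borel_measurable (PiM UNIV (\<lambda>_::'d. lap b))" for j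
  proof -
    have "(\<lambda>f. (\<chi> i. f i) \<bullet> axis j (1::real)) = (\<lambda>f. f j)"
      by (simp add: inner_axis)
    moreover have "(\<lambda>f. f j) \<in> borel_measurable (PiM UNIV (\<lambda>_::'d. lap b))"
      using measurable_component_singleton[of j UNIV "\<lambda>_. lap b"] by simp
    ultimately show ?thesis by simp
  qed
  then show ?thesis
    by (intro borel_measurable_euclidean_space[THEN iffD2]) (auto simp: Basis_vec_def)
qed
lemma sets_lap_vec[simp, measurable_cong]: "sets (lap_vec b) = sets borel"
  by (simp add: lap_vec_def)

lemma space_lap_vec[simp]: "space (lap_vec b) = UNIV"
  by (simp add: lap_vec_def)

lemma prob_space_lap_vec: "b > 0 \<Longrightarrow> prob_space (lap_vec b)"
  unfolding lap_vec_def
  by (intro prob_space.prob_space_distr prob_space_PiM prob_space_lap vec_meas) auto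

lemma multi_shift:
  fixes u :: "'d::finite \<Rightarrow> real"
  assumes b: "b > 0" and F: "finite F"
  shows "\<And>H. H \<in> borel_measurable (PiM UNIV (\<lambda>_::'d. lap b)) \<Longrightarrow>
    (\<integral>\<^sup>+f. H (\<lambda>i. if i \<in> F then f i + u i else f i) \<partial>PiM UNIV (\<lambda>_. lap b))
      \<le> ennreal (\<Prod>i\<in>F. exp (\<bar>u i\<bar> / b)) * (\<integral>\<^sup>+f. H f \<partial>PiM UNIV (\<lambda>_. lap b))"
  using F
proof (induction F rule: finite_induct)
  case empty
  then show ?case by simp
next
  case (insert i F H)
  let ?P = "PiM UNIV (\<lambda>_::'d. lap b)"
  define mF where "mF = (\<lambda>f::'d\<Rightarrow>real. \<lambda>l. if l \<in> F then f l + u l else f l)"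
  have mFm: "mF \<in> measurable ?P ?P"
    unfolding mF_def
  proof (rule measurable_PiM_single')
    fix l :: 'd
    have "(\<lambda>f. if l \<in> F then f l + u l else f l) \<in> borel_measurable ?P"
      using measurable_component_singleton[of l UNIV "\<lambda>_. lap b"]
      by (simp)
    then show "(\<lambda>f. if l \<in> F then f l + u l else f l) \<in> measurable ?P (lap b)"
      by (simp)
  qed (simp add: space_PiM)
  have HmF: "(\<lambda>f. H (mF f)) \<in> borel_measurable ?P"
    using measurable_comp[OF mFm insert.prems] by (simp add: comp_def)
  have eq: "(\<lambda>l. if l \<in> insert i F then f l + u l else f l) = mF (f(i := f i + u i))" for f
    using insert.hyps by (auto simp: mF_def fun_eq_iff)
  have sf: "\<And>j. sigma_finite_measure (lap b)"
    using prob_space_lap[OF b] by (simp add: prob_space_imp_sigma_finite)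
  have "(\<integral>\<^sup>+f. H (\<lambda>l. if l \<in> insert i F then f l + u l else f l) \<partial>?P)
      = (\<integral>\<^sup>+f. H (mF (f(i := f i + u i))) \<partial>?P)" by (simp only: eq)
  also have "\<dots> \<le> ennreal (exp (\<bar>u i\<bar> / b)) * (\<integral>\<^sup>+f. H (mF f) \<partial>?P)"
  proof (rule coord_shift[where h="\<lambda>f. H (mF f)" and g="\<lambda>t. t + u i", OF sf _ _ _ _ HmF])
    show "(\<lambda>t. t + u i) \<in> measurable (lap b) (lap b)"
      by (simp)
    fix h :: "real \<Rightarrow> ennreal" assume "h \<in> borel_measurable (lap b)"
    then have "h \<in> borel_measurable borel" by (simp)
    then show "(\<integral>\<^sup>+t. h (t + u i) \<partial>lap b) \<le> ennreal (exp (\<bar>u i\<bar> / b)) * (\<integral>\<^sup>+t. h t \<partial>lap b)"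
      by (rule lap_shift[OF b])
  qed auto
  also have "\<dots> \<le> ennreal (exp (\<bar>u i\<bar> / b)) * (ennreal (\<Prod>i\<in>F. exp (\<bar>u i\<bar> / b)) * (\<integral>\<^sup>+f. H f \<partial>?P))"
    using insert.IH[OF insert.prems] unfolding mF_def by (intro mult_left_mono) auto
  also have "\<dots> = ennreal (\<Prod>i\<in>insert i F. exp (\<bar>u i\<bar> / b)) * (\<integral>\<^sup>+f. H f \<partial>?P)"
    using insert.hyps by (simp add: ennreal_mult' prod_nonneg mult.assoc)
  finally show ?case .
qed

lemma lapvec_shift:
  fixes u :: "real^'d"
  assumes b: "b > 0" and h: "h \<in> borel_measurable borel"
  shows "(\<integral>\<^sup>+v. h (v + u) \<partial>lap_vec b) \<le> ennreal (exp (l1norm u / b)) * (\<integral>\<^sup>+v. h v \<partial>lap_vec b)"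
proof -
  let ?P = "PiM UNIV (\<lambda>_::'d. lap b)"
  have hv: "(\<lambda>f. h (\<chi> i. f i)) \<in> borel_measurable ?P"
    using measurable_comp[OF vec_meas h] by (simp add: comp_def)
  have "(\<integral>\<^sup>+v. h (v + u) \<partial>lap_vec b) = (\<integral>\<^sup>+f. h ((\<chi> i. f i) + u) \<partial>?P)"
    unfolding lap_vec_def using h by (subst nn_integral_distr[OF vec_meas]) auto
  also have "\<dots> = (\<integral>\<^sup>+f. h (\<chi> i. (\<lambda>i. if i \<in> UNIV then f i + u $ i else f i) i) \<partial>?P)"
    by (intro nn_integral_cong arg_cong[where f=h]) (simp add: vec_eq_iff)
  also have "\<dots> \<le> ennreal (\<Prod>i\<in>UNIV. exp (\<bar>u $ i\<bar> / b)) * (\<integral>\<^sup>+f. h (\<chi> i. f i) \<partial>?P)"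
    by (rule multi_shift[OF b finite, of "\<lambda>f. h (\<chi> i. f i)", OF hv])
  also have "(\<Prod>i\<in>UNIV. exp (\<bar>u $ i\<bar> / b)) = exp (l1norm u / b)"
    by (simp add: l1norm_def exp_sum sum_divide_distrib)
  also have "(\<integral>\<^sup>+f. h (\<chi> i. f i) \<partial>?P) = (\<integral>\<^sup>+v. h v \<partial>lap_vec b)"
    unfolding lap_vec_def using h by (subst nn_integral_distr[OF vec_meas]) auto
  finally show ?thesis .
qed

lemma pair_shift:
  assumes s1: "sigma_finite_measure M1" and s2: "sigma_finite_measure M2"
    and g1: "g1 \<in> measurable M1 M1" and g2: "g2 \<in> measurable M2 M2"
    and bd1: "\<And>h. h \<in> borel_measurable M1 \<Longrightarrow> (\<integral>\<^sup>+y. h (g1 y) \<partial>M1) \<le> c1 * (\<integral>\<^sup>+y. h y \<partial>M1)"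
    and bd2: "\<And>h. h \<in> borel_measurable M2 \<Longrightarrow> (\<integral>\<^sup>+y. h (g2 y) \<partial>M2) \<le> c2 * (\<integral>\<^sup>+y. h y \<partial>M2)"
    and hm: "h \<in> borel_measurable (M1 \<Otimes>\<^sub>M M2)"
  shows "(\<integral>\<^sup>+z. h (g1 (fst z), g2 (snd z)) \<partial>(M1 \<Otimes>\<^sub>M M2)) \<le> c1 * c2 * (\<integral>\<^sup>+z. h z \<partial>(M1 \<Otimes>\<^sub>M M2))"
proof -
  interpret M2: sigma_finite_measure M2 by (rule s2)
  have gm: "(\<lambda>z. (g1 (fst z), g2 (snd z))) \<in> measurable (M1 \<Otimes>\<^sub>M M2) (M1 \<Otimes>\<^sub>M M2)"
    using g1 g2 by measurable
  have hg: "(\<lambda>z. h (g1 (fst z), g2 (snd z))) \<in> borel_measurable (M1 \<Otimes>\<^sub>M M2)"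
    using measurable_comp[OF gm hm] by (simp add: comp_def)
  have H: "(\<lambda>x. \<integral>\<^sup>+y. h (x, y) \<partial>M2) \<in> borel_measurable M1"
    by (rule M2.borel_measurable_nn_integral_fst[OF hm])
  have "(\<integral>\<^sup>+z. h (g1 (fst z), g2 (snd z)) \<partial>(M1 \<Otimes>\<^sub>M M2)) = (\<integral>\<^sup>+x. \<integral>\<^sup>+y. h (g1 x, g2 y) \<partial>M2 \<partial>M1)"
    using M2.nn_integral_fst[OF hg] by simp
  also have "\<dots> \<le> (\<integral>\<^sup>+x. c2 * \<integral>\<^sup>+y. h (g1 x, y) \<partial>M2 \<partial>M1)"
  proof (rule nn_integral_mono)
    fix x assume x: "x \<in> space M1"
    have "g1 x \<in> space M1" using g1 x by (rule measurable_space)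
    then have "(\<lambda>y. h (g1 x, y)) \<in> borel_measurable M2"
      using hm by measurable
    then show "(\<integral>\<^sup>+y. h (g1 x, g2 y) \<partial>M2) \<le> c2 * \<integral>\<^sup>+y. h (g1 x, y) \<partial>M2"
      by (rule bd2)
  qed
  also have "\<dots> = c2 * (\<integral>\<^sup>+x. \<integral>\<^sup>+y. h (g1 x, y) \<partial>M2 \<partial>M1)"
    using measurable_comp[OF g1 H] by (subst nn_integral_cmult) (auto simp: comp_def)
  also have "\<dots> \<le> c2 * (c1 * (\<integral>\<^sup>+x. \<integral>\<^sup>+y. h (x, y) \<partial>M2 \<partial>M1))"
    using bd1[OF H] by (intro mult_left_mono) auto
  also have "\<dots> = c1 * c2 * (\<integral>\<^sup>+z. h z \<partial>(M1 \<Otimes>\<^sub>M M2))"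
    using M2.nn_integral_fst[OF hm] by (simp add: mult_ac)
  finally show ?thesis .
qed

lemma measurable_lapvec1[simp]: "measurable (lap_vec b) M = measurable borel M"
  by (rule measurable_cong_sets) (auto simp: lap_vec_def)

lemma measurable_lapvec2[simp]: "measurable M (lap_vec b) = measurable M borel"
  by (rule measurable_cong_sets) (auto simp: lap_vec_def)

lemma prob_space_L:
  assumes "bc > 0" "bs > 0"
  shows "prob_space (lap bc \<Otimes>\<^sub>M (lap_vec bs :: (real^'d) measure))"
proof -
  interpret P1: prob_space "lap bc" using prob_space_lap assms by auto
  interpret P2: prob_space "lap_vec bs :: (real^'d) measure" using prob_space_lap_vec assms by auto
  interpret pair_prob_space "lap bc" "lap_vec bs :: (real^'d) measure" ..
  show ?thesis by (rule prob_space_axioms)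
qed

lemma L_shift:
  fixes v :: "real^'d"
  assumes bc: "bc > 0" and bs: "bs > 0"
    and h: "h \<in> borel_measurable (lap bc \<Otimes>\<^sub>M (lap_vec bs :: (real^'d) measure))"
  shows "(\<integral>\<^sup>+z. h (fst z + a, snd z + v) \<partial>(lap bc \<Otimes>\<^sub>M lap_vec bs))
     \<le> ennreal (exp (\<bar>a\<bar> / bc)) * ennreal (exp (l1norm v / bs)) * (\<integral>\<^sup>+z. h z \<partial>(lap bc \<Otimes>\<^sub>M lap_vec bs))"
proof (rule pair_shift[OF _ _ _ _ _ _ h])
  show "sigma_finite_measure (lap bc)"
    by (rule prob_space_imp_sigma_finite[OF prob_space_lap[OF bc]])
  show "sigma_finite_measure (lap_vec bs :: (real^'d) measure)"
    by (rule prob_space_imp_sigma_finite[OF prob_space_lap_vec[OF bs]])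
  show "(\<lambda>t. t + a) \<in> measurable (lap bc) (lap bc)" by simp
  show "(\<lambda>t. t + v) \<in> measurable (lap_vec bs) (lap_vec bs)" by simp
  fix g :: "real \<Rightarrow> ennreal" assume "g \<in> borel_measurable (lap bc)"
  then show "(\<integral>\<^sup>+t. g (t + a) \<partial>lap bc) \<le> ennreal (exp (\<bar>a\<bar> / bc)) * (\<integral>\<^sup>+t. g t \<partial>lap bc)"
    by (intro lap_shift[OF bc]) simp
next
  fix g :: "real^'d \<Rightarrow> ennreal" assume "g \<in> borel_measurable (lap_vec bs)"
  then show "(\<integral>\<^sup>+t. g (t + v) \<partial>lap_vec bs) \<le> ennreal (exp (l1norm v / bs)) * (\<integral>\<^sup>+t. g t \<partial>lap_vec bs)"
    by (intro lapvec_shift[OF bs]) simp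
qed

definition shiftn :: "nat \<Rightarrow> nat \<Rightarrow> real \<Rightarrow> real^'d \<Rightarrow> (nat \<Rightarrow> real \<times> (real^'d)) \<Rightarrow> (nat \<Rightarrow> real \<times> (real^'d))" where
  "shiftn k j a v y = (\<lambda>j'\<in>{..<k}. if j' = j then (fst (y j') + a, snd (y j') + v) else y j')"

lemma l1norm_nonneg: "l1norm x \<ge> 0"
  by (simp add: l1norm_def sum_nonneg)

lemma N_shift:
  fixes v :: "real^'d"
  assumes bc: "bc > 0" and bs: "bs > 0"
    and h: "h \<in> borel_measurable (iter_noise k bc bs :: (nat \<Rightarrow> real \<times> (real^'d)) measure)"
  shows "(\<integral>\<^sup>+y. h (shiftn k j a v y) \<partial>iter_noise k bc bs)
     \<le> ennreal (exp (\<bar>a\<bar> / bc + l1norm v / bs)) * (\<integral>\<^sup>+y. h y \<partial>iter_noise k bc bs)"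
proof (cases "j < k")
  case True
  let ?L = "lap bc \<Otimes>\<^sub>M (lap_vec bs :: (real^'d) measure)"
  have sf: "\<And>i. sigma_finite_measure ?L"
    by (rule prob_space_imp_sigma_finite[OF prob_space_L[OF bc bs]])
  have "(\<integral>\<^sup>+y. h (shiftn k j a v y) \<partial>iter_noise k bc bs)
      = (\<integral>\<^sup>+y. h (y(j := (fst (y j) + a, snd (y j) + v))) \<partial>PiM {..<k} (\<lambda>_. ?L))"
    unfolding iter_noise_def
  proof (intro nn_integral_cong arg_cong[where f=h])
    fix y assume "y \<in> space (PiM {..<k} (\<lambda>_. ?L))"
    then have "y \<in> extensional {..<k}" by (simp add: space_PiM PiE_def)
    then show "shiftn k j a v y = y(j := (fst (y j) + a, snd (y j) + v))"
      using True by (auto simp: shiftn_def fun_eq_iff extensional_def)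
  qed
  also have "\<dots> \<le> (ennreal (exp (\<bar>a\<bar> / bc)) * ennreal (exp (l1norm v / bs))) * (\<integral>\<^sup>+y. h y \<partial>PiM {..<k} (\<lambda>_. ?L))"
  proof (rule coord_shift[where g="\<lambda>z. (fst z + a, snd z + v)", OF sf])
    show "h \<in> borel_measurable (PiM {..<k} (\<lambda>_. ?L))" using h by (simp add: iter_noise_def)
    show "(\<lambda>z. (fst z + a, snd z + v)) \<in> measurable ?L ?L" by measurable
    fix g :: "real \<times> (real^'d) \<Rightarrow> ennreal" assume "g \<in> borel_measurable ?L"
    then show "(\<integral>\<^sup>+z. g (fst z + a, snd z + v) \<partial>?L) \<le> ennreal (exp (\<bar>a\<bar> / bc)) * ennreal (exp (l1norm v / bs)) * (\<integral>\<^sup>+z. g z \<partial>?L)"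
      by (rule L_shift[OF bc bs])
  qed (use True in auto)
  also have "ennreal (exp (\<bar>a\<bar> / bc)) * ennreal (exp (l1norm v / bs)) = ennreal (exp (\<bar>a\<bar> / bc + l1norm v / bs))"
    by (simp add: ennreal_mult' exp_add)
  finally show ?thesis by (simp add: iter_noise_def)
next
  case False
  have "(\<integral>\<^sup>+y. h (shiftn k j a v y) \<partial>iter_noise k bc bs) = (\<integral>\<^sup>+y. h y \<partial>iter_noise k bc bs)"
  proof (intro nn_integral_cong arg_cong[where f=h])
    fix y assume "y \<in> space (iter_noise k bc bs :: (nat \<Rightarrow> real \<times> (real^'d)) measure)"
    then have "y \<in> extensional {..<k}" by (simp add: space_PiM PiE_def iter_noise_def)
    then show "shiftn k j a v y = y"
      using False by (auto simp: shiftn_def fun_eq_iff extensional_def)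
  qed
  also have "\<dots> \<le> ennreal (exp (\<bar>a\<bar> / bc + l1norm v / bs)) * (\<integral>\<^sup>+y. h y \<partial>iter_noise k bc bs)"
  proof -
    have "0 \<le> \<bar>a\<bar> / bc + l1norm v / bs" using bc bs l1norm_nonneg[of v] by simp
    then have "1 \<le> ennreal (exp (\<bar>a\<bar> / bc + l1norm v / bs))" by simp
    then show ?thesis using mult_right_mono[of 1 _ "\<integral>\<^sup>+y. h y \<partial>iter_noise k bc bs"] by simp
  qed
  finally show ?thesis .
qed

lemma adaptive:
  fixes N :: "'y measure" and J :: "nat \<Rightarrow> (nat \<Rightarrow> 'y) \<Rightarrow> 'j" and g :: "'j \<Rightarrow> 'y \<Rightarrow> 'y"
  assumes sfN: "sigma_finite_measure N"
    and bd: "\<And>j h. h \<in> borel_measurable N \<Longrightarrow> (\<integral>\<^sup>+y. h (g j y) \<partial>N) \<le> c * (\<integral>\<^sup>+y. h y \<partial>N)"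
    and dep: "\<And>t ns ns'. (\<And>i. i < t \<Longrightarrow> ns i = ns' i) \<Longrightarrow> J t ns = J t ns'"
    and Pm: "\<And>T. (\<lambda>ns. \<lambda>t\<in>{..<T}. g (J t ns) (ns t)) \<in> measurable (PiM {..<T} (\<lambda>_. N)) (PiM {..<T} (\<lambda>_. N))"
  shows "\<And>h. h \<in> borel_measurable (PiM {..<T} (\<lambda>_. N)) \<Longrightarrow>
    (\<integral>\<^sup>+ns. h (\<lambda>t\<in>{..<T}. g (J t ns) (ns t)) \<partial>PiM {..<T} (\<lambda>_. N)) \<le> c^T * (\<integral>\<^sup>+ns. h ns \<partial>PiM {..<T} (\<lambda>_. N))"
proof (induction T)
  case 0
  have "(\<integral>\<^sup>+ns. h (\<lambda>t\<in>{..<0::nat}. g (J t ns) (ns t)) \<partial>PiM {..<0} (\<lambda>_. N)) = (\<integral>\<^sup>+ns. h ns \<partial>PiM {..<0} (\<lambda>_. N))"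
    by (intro nn_integral_cong arg_cong[where f=h]) (auto simp: space_PiM)
  then show ?case unfolding power_0 mult_1 by (rule order_eq_refl)
next
  case (Suc T h)
  interpret product_sigma_finite "\<lambda>_::nat. N" using sfN by (simp add: product_sigma_finite_def)
  let ?P = "PiM {..<T} (\<lambda>_. N)"
  define Phi where "Phi = (\<lambda>ns. \<lambda>t\<in>{..<T}. g (J t ns) (ns t))"
  have I: "{..<Suc T} = insert T {..<T}" by auto
  have PI: "PiM {..<Suc T} (\<lambda>_. N) = PiM (insert T {..<T}) (\<lambda>_. N)" by (simp only: I)
  have hI: "h \<in> borel_measurable (PiM (insert T {..<T}) (\<lambda>_. N))" using Suc.prems I by simp
  have f: "(\<lambda>ns. h (\<lambda>t\<in>{..<Suc T}. g (J t ns) (ns t))) \<in> borel_measurable (PiM (insert T {..<T}) (\<lambda>_. N))"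
    using measurable_comp[OF Pm[of "Suc T"] Suc.prems] I by (simp add: comp_def)
  have G: "(\<lambda>z. \<integral>\<^sup>+y. h (z(T := y)) \<partial>N) \<in> borel_measurable ?P"
    using hI by measurable
  have PhiM: "Phi \<in> measurable ?P ?P" unfolding Phi_def by (rule Pm)
  have "(\<integral>\<^sup>+ns. h (\<lambda>t\<in>{..<Suc T}. g (J t ns) (ns t)) \<partial>PiM {..<Suc T} (\<lambda>_. N))
     = (\<integral>\<^sup>+x. \<integral>\<^sup>+y. h (\<lambda>t\<in>{..<Suc T}. g (J t (x(T := y))) ((x(T := y)) t)) \<partial>N \<partial>?P)"
    unfolding PI by (rule product_nn_integral_insert[OF _ _ f]) auto
  also have "\<dots> = (\<integral>\<^sup>+x. \<integral>\<^sup>+y. h ((Phi x)(T := g (J T x) y)) \<partial>N \<partial>?P)"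
  proof (intro nn_integral_cong arg_cong[where f=h])
    fix x y
    have "J t (x(T := y)) = J t x" if "t \<le> T" for t
      by (rule dep) (use that in auto)
    then show "(\<lambda>t\<in>{..<Suc T}. g (J t (x(T := y))) ((x(T := y)) t)) = (Phi x)(T := g (J T x) y)"
      by (auto simp: Phi_def fun_eq_iff)
  qed
  also have "\<dots> \<le> (\<integral>\<^sup>+x. c * \<integral>\<^sup>+y. h ((Phi x)(T := y)) \<partial>N \<partial>?P)"
  proof (rule nn_integral_mono)
    fix x assume x: "x \<in> space ?P"
    have "Phi x \<in> space ?P" using PhiM x by (rule measurable_space)
    then have "(\<lambda>y. h ((Phi x)(T := y))) \<in> borel_measurable N"
      using measurable_comp[OF measurable_component_update[of "Phi x" "{..<T}" "\<lambda>_. N" T] hI]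
      by (simp add: comp_def)
    then show "(\<integral>\<^sup>+y. h ((Phi x)(T := g (J T x) y)) \<partial>N) \<le> c * \<integral>\<^sup>+y. h ((Phi x)(T := y)) \<partial>N"
      by (rule bd)
  qed
  also have "\<dots> = c * (\<integral>\<^sup>+x. \<integral>\<^sup>+y. h ((Phi x)(T := y)) \<partial>N \<partial>?P)"
    using measurable_comp[OF PhiM G] by (subst nn_integral_cmult) (auto simp: comp_def)
  also have "\<dots> \<le> c * (c^T * (\<integral>\<^sup>+z. \<integral>\<^sup>+y. h (z(T := y)) \<partial>N \<partial>?P))"
  proof (rule mult_left_mono)
    have Phi_app: "Phi ns = (\<lambda>t\<in>{..<T}. g (J t ns) (ns t))" for ns by (simp add: Phi_def)
    show "(\<integral>\<^sup>+x. \<integral>\<^sup>+y. h ((Phi x)(T := y)) \<partial>N \<partial>?P) \<le> c^T * (\<integral>\<^sup>+z. \<integral>\<^sup>+y. h (z(T := y)) \<partial>N \<partial>?P)"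
      using Suc.IH[OF G] by (simp only: Phi_app)
  qed simp
  also have "\<dots> = c^Suc T * (\<integral>\<^sup>+ns. h ns \<partial>PiM {..<Suc T} (\<lambda>_. N))"
    unfolding PI by (subst product_nn_integral_insert[OF _ _ hI]) (auto simp: mult_ac)
  finally show ?case .
qed

lemma cw_add: "cluster_weight k (add_mset (w, x) S) c j = cluster_weight k S c j + (if assign k c x = j then w else 0)"
  by (simp add: cluster_weight_def)

lemma cs_add: "cluster_sum k (add_mset (w, x) S) c j = cluster_sum k S c j + (if assign k c x = j then w *\<^sub>R x else 0)"
  by (simp add: cluster_sum_def)

lemma assign_meas[measurable]:
  assumes [measurable]: "\<And>j. (\<lambda>\<omega>. c \<omega> j) \<in> borel_measurable M"
  shows "(\<lambda>\<omega>. assign k (c \<omega>) x) \<in> measurable M (count_space UNIV)"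
  unfolding assign_def by measurable

lemma cw_meas[measurable]:
  assumes [measurable]: "\<And>j. (\<lambda>\<omega>. c \<omega> j) \<in> borel_measurable M"
  shows "(\<lambda>\<omega>. cluster_weight k S (c \<omega>) j) \<in> borel_measurable M"
proof (induction S)
  case empty
  then show ?case by (simp add: cluster_weight_def)
next
  case (add p S)
  obtain w x where p: "p = (w, x)" by force
  show ?case unfolding p cw_add using add.IH by measurable
qed

lemma cs_meas[measurable]:
  assumes [measurable]: "\<And>j. (\<lambda>\<omega>. c \<omega> j) \<in> borel_measurable M"
  shows "(\<lambda>\<omega>. cluster_sum k S (c \<omega>) j) \<in> borel_measurable M"
proof (induction S)
  case empty
  then show ?case by (simp add: cluster_sum_def)
next
  case (add p S)
  obtain w x where p: "p = (w, x)" by force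
  show ?case unfolding p cs_add using add.IH by measurable
qed

lemma run_dep: "(\<And>i. i < t \<Longrightarrow> ns i = ns' i) \<Longrightarrow> lloyd_run k S c0 t ns = lloyd_run k S c0 t ns'"
  by (induction t) auto

definition Phi where
  "Phi k SJ c0 x a v T ns = (\<lambda>t\<in>{..<T}. shiftn k (assign k (lloyd_run k SJ c0 t ns) x) a v (ns t))"

lemma step_shift:
  assumes w: "\<And>j. j < k \<Longrightarrow> cluster_weight k SA c j + (if assign k c x = j then a else 0) = cluster_weight k SB c j"
    and s: "\<And>j. j < k \<Longrightarrow> cluster_sum k SA c j + (if assign k c x = j then v else 0) = cluster_sum k SB c j"
  shows "lloyd_step k SA c (shiftn k (assign k c x) a v y) = lloyd_step k SB c y"
proof
  fix j
  show "lloyd_step k SA c (shiftn k (assign k c x) a v y) j = lloyd_step k SB c y j"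
  proof (cases "j < k")
    case True
    show ?thesis
    proof (cases "assign k c x = j")
      case True
      have "fst (y j) + a + cluster_weight k SA c j = fst (y j) + cluster_weight k SB c j"
        using w[OF \<open>j < k\<close>] True by simp
      moreover have "snd (y j) + v + cluster_sum k SA c j = snd (y j) + cluster_sum k SB c j"
        using s[OF \<open>j < k\<close>] True by (simp add: algebra_simps)
      ultimately show ?thesis using \<open>j < k\<close> True by (simp add: lloyd_step_def shiftn_def add.assoc)
    next
      case False
      then show ?thesis using \<open>j < k\<close> w[OF \<open>j < k\<close>] s[OF \<open>j < k\<close>]
        by (simp add: lloyd_step_def shiftn_def)
    qed
  next
    case False
    then show ?thesis by (simp add: lloyd_step_def)
  qed
qed

lemma run_shift:
  assumes w: "\<And>c j. j < k \<Longrightarrow> cluster_weight k SA c j + (if assign k c x = j then a else 0) = cluster_weight k SB c j"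
    and s: "\<And>c j. j < k \<Longrightarrow> cluster_sum k SA c j + (if assign k c x = j then v else 0) = cluster_sum k SB c j"
  shows "t \<le> T \<Longrightarrow> lloyd_run k SA c0 t (Phi k SB c0 x a v T ns) = lloyd_run k SB c0 t ns"
proof (induction t)
  case 0
  then show ?case by simp
next
  case (Suc t)
  then have "t < T" by simp
  have "lloyd_run k SA c0 (Suc t) (Phi k SB c0 x a v T ns)
      = lloyd_step k SA (lloyd_run k SB c0 t ns) (shiftn k (assign k (lloyd_run k SB c0 t ns) x) a v (ns t))"
  proof -
    have IH: "lloyd_run k SA c0 t (Phi k SB c0 x a v T ns) = lloyd_run k SB c0 t ns"
      using Suc by simp
    have P: "Phi k SB c0 x a v T ns t = shiftn k (assign k (lloyd_run k SB c0 t ns) x) a v (ns t)"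
      using \<open>t < T\<close> by (simp add: Phi_def)
    show ?thesis by (simp only: lloyd_run.simps IH P)
  qed
  also have "\<dots> = lloyd_step k SB (lloyd_run k SB c0 t ns) (ns t)"
    by (rule step_shift[OF w s])
  finally show ?case by simp
qed

lemma comp_meas:
  assumes "t < T" "j < k"
  shows "(\<lambda>ns. ns t j) \<in> measurable (PiM {..<T} (\<lambda>_. iter_noise k bc bs)) (lap bc \<Otimes>\<^sub>M (lap_vec bs :: (real^'d) measure))"
proof -
  have 1: "(\<lambda>ns. ns t) \<in> measurable (PiM {..<T} (\<lambda>_. iter_noise k bc bs)) (iter_noise k bc bs :: (nat \<Rightarrow> real \<times> (real^'d)) measure)"
    using assms by simp
  have 2: "(\<lambda>y. y j) \<in> measurable (iter_noise k bc bs :: (nat \<Rightarrow> real \<times> (real^'d)) measure) (lap bc \<Otimes>\<^sub>M (lap_vec bs :: (real^'d) measure))"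
    using assms unfolding iter_noise_def by simp
  show ?thesis using measurable_comp[OF 1 2] by (simp add: comp_def)
qed

lemma comp_meas_fst[measurable]:
  assumes "t < T" "j < k"
  shows "(\<lambda>ns. fst (ns t j)) \<in> borel_measurable (PiM {..<T} (\<lambda>_. iter_noise k bc bs :: (nat \<Rightarrow> real \<times> (real^'d)) measure))"
  using measurable_comp[OF comp_meas[OF assms] measurable_fst] by (simp add: comp_def)

lemma comp_meas_snd[measurable]:
  assumes "t < T" "j < k"
  shows "(\<lambda>ns. snd (ns t j)) \<in> borel_measurable (PiM {..<T} (\<lambda>_. iter_noise k bc bs :: (nat \<Rightarrow> real \<times> (real^'d)) measure))"
  using measurable_comp[OF comp_meas[OF assms] measurable_snd] by (simp add: comp_def)

lemma run_meas:
  "t \<le> T \<Longrightarrow> (\<lambda>ns. lloyd_run k S c0 t ns j) \<in> borel_measurable (PiM {..<T} (\<lambda>_. iter_noise k bc bs :: (nat \<Rightarrow> real \<times> (real^'d)) measure))"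
proof (induction t arbitrary: j)
  case 0
  then show ?case by simp
next
  case (Suc t)
  then have tT: "t < T" and IH[measurable]: "\<And>j. (\<lambda>ns. lloyd_run k S c0 t ns j) \<in> borel_measurable (PiM {..<T} (\<lambda>_. iter_noise k bc bs :: (nat \<Rightarrow> real \<times> (real^'d)) measure))"
    by auto
  show ?case
  proof (cases "j < k")
    case True
    note [measurable] = comp_meas_fst[OF tT True] comp_meas_snd[OF tT True]
    show ?thesis using True by (simp add: lloyd_step_def) measurable
  next
    case False
    then show ?thesis by (simp add: lloyd_step_def)
  qed
qed

lemma shift_comp_meas:
  assumes tT: "t < T" and jk': "j < k"
  shows "(\<lambda>ns. if j = assign k (lloyd_run k SJ c0 t ns) x then (fst (ns t j) + a, snd (ns t j) + v) else ns t j)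
        \<in> measurable (PiM {..<T} (\<lambda>_. iter_noise k bc bs :: (nat \<Rightarrow> real \<times> (real^'d)) measure)) (lap bc \<Otimes>\<^sub>M lap_vec bs)"
proof -
  have [measurable]: "\<And>j. (\<lambda>ns. lloyd_run k SJ c0 t ns j) \<in> borel_measurable (PiM {..<T} (\<lambda>_. iter_noise k bc bs :: (nat \<Rightarrow> real \<times> (real^'d)) measure))"
    using tT by (intro run_meas) simp
  note [measurable] = comp_meas[OF tT jk'] comp_meas_fst[OF tT jk'] comp_meas_snd[OF tT jk']
  show ?thesis by measurable
qed

lemma Phi_meas:
  "Phi k SJ c0 x a v T \<in> measurable (PiM {..<T} (\<lambda>_. iter_noise k bc bs :: (nat \<Rightarrow> real \<times> (real^'d)) measure)) (PiM {..<T} (\<lambda>_. iter_noise k bc bs))"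
proof -
  have "(\<lambda>ns. shiftn k (assign k (lloyd_run k SJ c0 t ns) x) a v (ns t)) \<in> measurable (PiM {..<T} (\<lambda>_. iter_noise k bc bs :: (nat \<Rightarrow> real \<times> (real^'d)) measure)) (iter_noise k bc bs)"
    if "t < T" for t
  proof -
    have "(\<lambda>ns. shiftn k (assign k (lloyd_run k SJ c0 t ns) x) a v (ns t)) \<in> measurable (PiM {..<T} (\<lambda>_. iter_noise k bc bs :: (nat \<Rightarrow> real \<times> (real^'d)) measure)) (PiM {..<k} (\<lambda>_. lap bc \<Otimes>\<^sub>M lap_vec bs))"
      unfolding shiftn_def by (intro measurable_restrict shift_comp_meas) (use that in auto)
    then show ?thesis by (simp only: iter_noise_def)
  qed
  then show ?thesis unfolding Phi_def[abs_def] by (intro measurable_restrict) auto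
qed

lemma R_meas:
  "(\<lambda>ns. restrict (lloyd_run k S c0 T ns) {..<k}) \<in> measurable (PiM {..<T} (\<lambda>_. iter_noise k bc bs :: (nat \<Rightarrow> real \<times> (real^'d)) measure)) (PiM {..<k} (\<lambda>_. borel))"
  by (intro measurable_restrict run_meas) simp

lemma l1norm_scaleR: "l1norm (r *\<^sub>R x) = \<bar>r\<bar> * l1norm x"
  by (simp add: l1norm_def abs_mult sum_distrib_left)

lemma l1norm_uminus: "l1norm (- x) = l1norm x"
  by (simp add: l1norm_def)

lemma prob_space_noise:
  assumes "bc > 0" "bs > 0"
  shows "prob_space (PiM {..<T} (\<lambda>_. iter_noise k bc bs :: (nat \<Rightarrow> real \<times> (real^'d)) measure))"
  unfolding iter_noise_def
  by (intro prob_space_PiM prob_space_L assms)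

lemma one_dir:
  fixes x :: "real^'d" and v :: "real^'d"
  assumes bc: "bc > 0" and bs: "bs > 0"
    and w: "\<And>c j. j < k \<Longrightarrow> cluster_weight k SA c j + (if assign k c x = j then a else 0) = cluster_weight k SB c j"
    and s: "\<And>c j. j < k \<Longrightarrow> cluster_sum k SA c j + (if assign k c x = j then v else 0) = cluster_sum k SB c j"
    and Y: "Y \<in> sets (PiM {..<k} (\<lambda>_. borel :: (real^'d) measure))"
  shows "measure (dp_lloyd k T bc bs c0 SB) Y \<le> exp (real T * (\<bar>a\<bar> / bc + l1norm v / bs)) * measure (dp_lloyd k T bc bs c0 SA) Y"
proof -
  let ?N = "iter_noise k bc bs :: (nat \<Rightarrow> real \<times> (real^'d)) measure"
  let ?M = "PiM {..<T} (\<lambda>_. ?N)"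
  let ?RA = "\<lambda>ns. restrict (lloyd_run k SA c0 T ns) {..<k}"
  let ?RB = "\<lambda>ns. restrict (lloyd_run k SB c0 T ns) {..<k}"
  let ?c = "ennreal (exp (\<bar>a\<bar> / bc + l1norm v / bs))"
  interpret M: prob_space ?M by (rule prob_space_noise[OF bc bs])
  have RA: "?RA \<in> measurable ?M (PiM {..<k} (\<lambda>_. borel))" by (rule R_meas)
  have RB: "?RB \<in> measurable ?M (PiM {..<k} (\<lambda>_. borel))" by (rule R_meas)
  define A where "A = ?RA -` Y \<inter> space ?M"
  have A: "A \<in> sets ?M" unfolding A_def using RA Y by (rule measurable_sets)
  have B: "?RB -` Y \<inter> space ?M \<in> sets ?M" using RB Y by (rule measurable_sets)
  have PhiM: "Phi k SB c0 x a v T \<in> measurable ?M ?M" by (rule Phi_meas)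
  have ind: "indicator (?RB -` Y \<inter> space ?M) ns = (indicator A (Phi k SB c0 x a v T ns) :: ennreal)"
    if ns: "ns \<in> space ?M" for ns
  proof -
    have "Phi k SB c0 x a v T ns \<in> space ?M" using PhiM ns by (rule measurable_space)
    moreover have "lloyd_run k SA c0 T (Phi k SB c0 x a v T ns) = lloyd_run k SB c0 T ns"
      by (rule run_shift[OF w s]) auto
    ultimately show ?thesis using ns by (auto simp: A_def split: split_indicator)
  qed
  have "emeasure ?M (?RB -` Y \<inter> space ?M) = (\<integral>\<^sup>+ns. indicator (?RB -` Y \<inter> space ?M) ns \<partial>?M)"
    using B by simp
  also have "\<dots> = (\<integral>\<^sup>+ns. indicator A (Phi k SB c0 x a v T ns) \<partial>?M)"
    by (rule nn_integral_cong) (rule ind)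
  also have "\<dots> = (\<integral>\<^sup>+ns. indicator A (\<lambda>t\<in>{..<T}. shiftn k (assign k (lloyd_run k SB c0 t ns) x) a v (ns t)) \<partial>?M)"
    by (simp add: Phi_def)
  also have "\<dots> \<le> ?c ^ T * (\<integral>\<^sup>+ns. indicator A ns \<partial>?M)"
  proof (rule adaptive[where N="?N" and J="\<lambda>t ns. assign k (lloyd_run k SB c0 t ns) x" and g="\<lambda>j. shiftn k j a v"])
    show "sigma_finite_measure ?N"
      unfolding iter_noise_def
      by (intro prob_space_imp_sigma_finite prob_space_PiM prob_space_L bc bs)
    show "\<And>j h. h \<in> borel_measurable ?N \<Longrightarrow> (\<integral>\<^sup>+y. h (shiftn k j a v y) \<partial>?N) \<le> ?c * (\<integral>\<^sup>+y. h y \<partial>?N)"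
      by (rule N_shift[OF bc bs])
    show "\<And>t ns ns'. (\<And>i. i < t \<Longrightarrow> ns i = ns' i) \<Longrightarrow> assign k (lloyd_run k SB c0 t ns) x = assign k (lloyd_run k SB c0 t ns') x"
      using run_dep by metis
    show "\<And>T. (\<lambda>ns. \<lambda>t\<in>{..<T}. shiftn k (assign k (lloyd_run k SB c0 t ns) x) a v (ns t)) \<in> measurable (PiM {..<T} (\<lambda>_. ?N)) (PiM {..<T} (\<lambda>_. ?N))"
      using Phi_meas unfolding Phi_def[abs_def] by blast
    show "indicator A \<in> borel_measurable ?M" using A by simp
  qed
  also have "\<dots> = ?c ^ T * emeasure ?M A" using A by simp
  finally have le: "emeasure ?M (?RB -` Y \<inter> space ?M) \<le> ?c ^ T * emeasure ?M A" .
  have cT: "?c ^ T = ennreal (exp (real T * (\<bar>a\<bar> / bc + l1norm v / bs)))"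
    by (simp add: ennreal_power exp_of_nat_mult)
  have "ennreal (measure ?M (?RB -` Y \<inter> space ?M)) \<le> ennreal (exp (real T * (\<bar>a\<bar> / bc + l1norm v / bs)) * measure ?M A)"
    using le unfolding cT by (simp add: M.emeasure_eq_measure ennreal_mult')
  then have "measure ?M (?RB -` Y \<inter> space ?M) \<le> exp (real T * (\<bar>a\<bar> / bc + l1norm v / bs)) * measure ?M A"
    by (simp add: ennreal_le_iff)
  moreover have "measure (dp_lloyd k T bc bs c0 SB) Y = measure ?M (?RB -` Y \<inter> space ?M)"
    unfolding dp_lloyd_def by (rule measure_distr[OF RB Y])
  moreover have "measure (dp_lloyd k T bc bs c0 SA) Y = measure ?M A"
    unfolding dp_lloyd_def A_def by (rule measure_distr[OF RA Y])
  ultimately show ?thesis by simp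
qed

theorem proposition5:
  fixes X :: "(real^'d) set" and k T :: nat and b_count b_sum :: real
    and c0 :: "nat \<Rightarrow> real^'d"
  assumes "b_count > 0" and "b_sum > 0"
  shows "weighted_profile X
           (\<lambda>w x. (1 / b_count + l1norm x / b_sum) * real T * w)
           (dp_lloyd k T b_count b_sum c0)"
  unfolding weighted_profile_def
proof (intro conjI allI impI)
  fix w :: real and x :: "real^'d" assume "1 \<le> w" "x \<in> X"
  then show "0 \<le> (1 / b_count + l1norm x / b_sum) * real T * w"
    using assms l1norm_nonneg[of x] by simp
next
  fix S :: "'d wdata" and w' :: real and x' :: "real^'d"
  assume w1: "1 \<le> w'" and "x' \<in> X"
  let ?S' = "add_mset (w', x') S"
  have eq1: "real T * (\<bar>- w'\<bar> / b_count + l1norm (- (w' *\<^sub>R x')) / b_sum) = (1 / b_count + l1norm x' / b_sum) * real T * w'"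
    using w1 by (simp add: l1norm_uminus l1norm_scaleR field_simps)
  have eq2: "real T * (\<bar>w'\<bar> / b_count + l1norm (w' *\<^sub>R x') / b_sum) = (1 / b_count + l1norm x' / b_sum) * real T * w'"
    using w1 by (simp add: l1norm_scaleR field_simps)
  show "indist ((1 / b_count + l1norm x' / b_sum) * real T * w') (dp_lloyd k T b_count b_sum c0 S) (dp_lloyd k T b_count b_sum c0 ?S')"
    unfolding indist_def
  proof (intro ballI conjI)
    fix Y assume "Y \<in> sets (dp_lloyd k T b_count b_sum c0 S)"
    then have Y: "Y \<in> sets (PiM {..<k} (\<lambda>_. borel :: (real^'d) measure))" by (simp add: dp_lloyd_def)
    show "measure (dp_lloyd k T b_count b_sum c0 S) Y \<le> exp ((1 / b_count + l1norm x' / b_sum) * real T * w') * measure (dp_lloyd k T b_count b_sum c0 ?S') Y"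
      using one_dir[OF assms _ _ Y, of ?S' x' "- w'" S "- (w' *\<^sub>R x')" T c0]
      unfolding eq1 by (simp add: cw_add cs_add)
    show "measure (dp_lloyd k T b_count b_sum c0 ?S') Y \<le> exp ((1 / b_count + l1norm x' / b_sum) * real T * w') * measure (dp_lloyd k T b_count b_sum c0 S) Y"
      using one_dir[OF assms _ _ Y, of S x' "w'" ?S' "w' *\<^sub>R x'" T c0]
      unfolding eq2 by (simp add: cw_add cs_add)
  qed
qed

end
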